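(* For every integer $n\ge 3$, $$\gamma_t(C_n\times C_4)=\gamma_p(C_n\times C_4)=\begin{cases} n, & \text{if } n\equiv 0 \pmod 4,\\ n+1, & \text{if } n\equiv 1,3 \pmod 4,\\ n+2, & \text{if } n\equiv 2\pmod 4.\end{cases}$$
   Context: All graphs are finite, simple and undirected. $C_n$ denotes the cycle of order $n$ and $G\times H$ the Cartesian product of graphs. For a graph $G$ without isolated vertices: a set $D\subseteq V(G)$ is a total dominating set if every vertex of $G$ (including those in $D$) has a neighbour in $D$; $\gamma_t(G)$ is the minimum size of a total dominating set. A set $D\subseteq V(G)$ is a paired dominating set if every vertex outside $D$ has a neighbour in $D$ and the induced subgraph $G[D]$ has a perfect matching; $\gamma_p(G)$ is the minimum size of a paired dominating set. *)

theory Defs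
  imports Main
begin

text \<open>A finite simple graph is given by a vertex set V and an adjacency
  relation E (assumed symmetric and irreflexive on V).\<close>

definition cycle_adj :: "nat \<Rightarrow> nat \<Rightarrow> nat \<Rightarrow> bool" where
  "cycle_adj n i j \<longleftrightarrow> i < n \<and> j < n \<and> (j = (i + 1) mod n \<or> i = (j + 1) mod n)"

definition cycle_V :: "nat \<Rightarrow> nat set" where
  "cycle_V n = {0..<n}"

definition cart_V :: "'a set \<Rightarrow> 'b set \<Rightarrow> ('a \<times> 'b) set" where
  "cart_V V1 V2 = V1 \<times> V2"

definition cart_adj :: "('a \<Rightarrow> 'a \<Rightarrow> bool) \<Rightarrow> ('b \<Rightarrow> 'b \<Rightarrow> bool)
    \<Rightarrow> ('a \<times> 'b) \<Rightarrow> ('a \<times> 'b) \<Rightarrow> bool" where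
  "cart_adj E1 E2 p q \<longleftrightarrow>
     (fst p = fst q \<and> E2 (snd p) (snd q)) \<or> (snd p = snd q \<and> E1 (fst p) (fst q))"

definition total_dominating :: "'a set \<Rightarrow> ('a \<Rightarrow> 'a \<Rightarrow> bool) \<Rightarrow> 'a set \<Rightarrow> bool" where
  "total_dominating V E D \<longleftrightarrow> D \<subseteq> V \<and> (\<forall>v\<in>V. \<exists>u\<in>D. E v u)"

definition gamma_t :: "'a set \<Rightarrow> ('a \<Rightarrow> 'a \<Rightarrow> bool) \<Rightarrow> nat" where
  "gamma_t V E = Min {card D | D. total_dominating V E D}"

definition perfect_matching_on :: "('a \<Rightarrow> 'a \<Rightarrow> bool) \<Rightarrow> 'a set \<Rightarrow> 'a set set \<Rightarrow> bool" where
  "perfect_matching_on E D M \<longleftrightarrow>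
     (\<forall>e\<in>M. \<exists>u v. e = {u, v} \<and> u \<in> D \<and> v \<in> D \<and> u \<noteq> v \<and> E u v) \<and>
     (\<forall>v\<in>D. \<exists>!e. e \<in> M \<and> v \<in> e)"

definition paired_dominating :: "'a set \<Rightarrow> ('a \<Rightarrow> 'a \<Rightarrow> bool) \<Rightarrow> 'a set \<Rightarrow> bool" where
  "paired_dominating V E D \<longleftrightarrow> D \<subseteq> V \<and> (\<forall>v\<in>V - D. \<exists>u\<in>D. E v u) \<and>
     (\<exists>M. perfect_matching_on E D M)"

definition gamma_p :: "'a set \<Rightarrow> ('a \<Rightarrow> 'a \<Rightarrow> bool) \<Rightarrow> nat" where
  "gamma_p V E = Min {card D | D. paired_dominating V E D}"

end

theory Submission imports Defs begin

lemma count_sum: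
  assumes "finite T" "finite X" "\<forall>t\<in>T. \<exists>x\<in>X. E t x" "\<forall>x\<in>X. card {t\<in>T. E t x} \<le> 4"
  shows "(\<Sum>t\<in>T. card {x\<in>X. E t x}) \<le> 4 * card X"
proof -
  have "(\<Sum>t\<in>T. card {x\<in>X. E t x}) = (\<Sum>x\<in>X. card {t\<in>T. E t x})"
    by (rule sum_multicount_gen) (use assms in auto)
  also have "\<dots> \<le> (\<Sum>x\<in>X. 4)" by (rule sum_mono) (use assms in auto)
  finally show ?thesis by simp
qed

lemma count_lower:
  assumes "finite T" "finite X" "\<forall>t\<in>T. \<exists>x\<in>X. E t x" "\<forall>x\<in>X. card {t\<in>T. E t x} \<le> 4"
  shows "card T \<le> 4 * card X"
proof -
  have "card T = (\<Sum>t\<in>T. 1)" by simp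
  also have "\<dots> \<le> (\<Sum>t\<in>T. card {x\<in>X. E t x})"
  proof (rule sum_mono)
    fix t assume "t \<in> T"
    then obtain x where "x \<in> X" "E t x" using assms by blast
    then have "{x\<in>X. E t x} \<noteq> {}" by blast
    then show "1 \<le> card {x\<in>X. E t x}" using assms(2)
      by (metis (no_types, lifting) One_nat_def Suc_leI card_gt_0_iff finite_subset mem_Collect_eq subsetI)
  qed
  also have "\<dots> \<le> 4 * card X" by (rule count_sum[OF assms])
  finally show ?thesis .
qed

lemma count_unique:
  assumes "finite T" "finite X" "\<forall>t\<in>T. \<exists>x\<in>X. E t x" "\<forall>x\<in>X. card {t\<in>T. E t x} \<le> 4"
    and "4 * card X \<le> card T" "t0 \<in> T" "x \<in> X" "y \<in> X" "E t0 x" "E t0 y"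
  shows "x = y"
proof (rule ccontr)
  assume xy: "x \<noteq> y"
  have "card T = (\<Sum>t\<in>T. 1)" by simp
  also have "\<dots> < (\<Sum>t\<in>T. card {x\<in>X. E t x})"
  proof (rule sum_strict_mono_ex1[OF assms(1)])
    show "\<forall>t\<in>T. 1 \<le> card {x\<in>X. E t x}"
    proof
      fix t assume "t \<in> T"
      then obtain x where "x \<in> X" "E t x" using assms by blast
      then have "{x\<in>X. E t x} \<noteq> {}" by blast
      then show "1 \<le> card {x\<in>X. E t x}" using assms(2)
        by (metis (no_types, lifting) One_nat_def Suc_leI card_gt_0_iff finite_subset mem_Collect_eq subsetI)
    qed
    have "{x, y} \<subseteq> {x\<in>X. E t0 x}" using assms by auto
    then have "card {x, y} \<le> card {x\<in>X. E t0 x}" by (rule card_mono[rotated]) (use assms in auto)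
    then show "\<exists>t\<in>T. 1 < card {x\<in>X. E t x}" using xy assms(6) by (intro bexI[of _ t0]) auto
  qed
  also have "\<dots> \<le> 4 * card X" by (rule count_sum[OF assms(1-4)])
  finally show False using assms(5) by simp
qed


definition GV :: "nat \<Rightarrow> (nat \<times> nat) set" where
  "GV n = cart_V (cycle_V n) (cycle_V 4)"
definition GE :: "nat \<Rightarrow> (nat \<times> nat) \<Rightarrow> (nat \<times> nat) \<Rightarrow> bool" where
  "GE n = cart_adj (cycle_adj n) (cycle_adj 4)"

lemma GV_eq: "GV n = {0..<n} \<times> {0..<4}"
  by (simp add: GV_def cart_V_def cycle_V_def)

lemma mem_GV[simp]: "(p \<in> GV n) = (fst p < n \<and> snd p < 4)"
  by (cases p) (auto simp: GV_eq)

lemma GE_iff: "GE n (i, j) (i', j') = ((i = i' \<and> cycle_adj 4 j j') \<or> (j = j' \<and> cycle_adj n i i'))"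
  by (simp add: GE_def cart_adj_def)

lemma cyc_sym: "cycle_adj n a b = cycle_adj n b a"
  by (auto simp: cycle_adj_def)

lemma GE_sym: "GE n p q = GE n q p"
  by (cases p; cases q) (auto simp: GE_iff cyc_sym)

lemma finite_GV[simp]: "finite (GV n)" by (simp add: GV_eq)
lemma card_GV: "card (GV n) = 4 * n" by (simp add: GV_eq)

lemma cyc_succ: "i < n \<Longrightarrow> cycle_adj n i ((i+1) mod n)"
  by (auto simp: cycle_adj_def)
lemma cyc_succ': "i < n \<Longrightarrow> cycle_adj n ((i+1) mod n) i"
  by (auto simp: cycle_adj_def)

lemma cyc_other: "cycle_adj n a b \<Longrightarrow> a = (b+1) mod n \<or> a = (b+n-1) mod n"
proof -
  assume h: "cycle_adj n a b"
  then have a: "a < n" "b < n" by (auto simp: cycle_adj_def)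
  show ?thesis
  proof (cases "b = (a+1) mod n")
    case True
    show ?thesis
    proof (cases "a + 1 < n")
      case True
      then have "b = a + 1" using \<open>b = (a+1) mod n\<close> by simp
      then have "(b+n-1) mod n = (a + n) mod n" by simp
      then show ?thesis using a by simp
    next
      case False
      then have "a + 1 = n" using a by simp
      then have "b = 0" using \<open>b = (a+1) mod n\<close> by simp
      have "(b+n-1) mod n = a" using \<open>b = 0\<close> \<open>a + 1 = n\<close> by simp
      then show ?thesis by simp
    qed
  next
    case False
    then show ?thesis using h by (auto simp: cycle_adj_def)
  qed
qed

lemma nbr_sub: "x \<in> GV n \<Longrightarrow>
  {t. GE n t x} \<subseteq> {((fst x+1) mod n, snd x), ((fst x+n-1) mod n, snd x),
                     (fst x, (snd x+1) mod 4), (fst x, (snd x+3) mod 4)}"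
proof
  fix t assume x: "x \<in> GV n" and "t \<in> {t. GE n t x}"
  then have e: "GE n t x" by simp
  obtain i j where xe: "x = (i, j)" by (cases x)
  obtain a b where te: "t = (a, b)" by (cases t)
  have "(a = i \<and> cycle_adj 4 b j) \<or> (b = j \<and> cycle_adj n a i)" using e by (simp add: xe te GE_iff)
  then show "t \<in> {((fst x+1) mod n, snd x), ((fst x+n-1) mod n, snd x),
                     (fst x, (snd x+1) mod 4), (fst x, (snd x+3) mod 4)}"
  proof
    assume "a = i \<and> cycle_adj 4 b j"
    then have "b = (j+1) mod 4 \<or> b = (j+4-1) mod 4" using cyc_other by blast
    then show ?thesis using \<open>a = i \<and> cycle_adj 4 b j\<close> by (auto simp: xe te add.commute)
  next
    assume "b = j \<and> cycle_adj n a i"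
    then have "a = (i+1) mod n \<or> a = (i+n-1) mod n" using cyc_other by blast
    then show ?thesis using \<open>b = j \<and> cycle_adj n a i\<close> by (auto simp: xe te)
  qed
qed

lemma card_ins_le: "finite A \<Longrightarrow> card (insert x A) \<le> Suc (card A)"
  by (simp add: card_insert_if)

lemma card4: "card {a,b,c,d} \<le> 4"
proof -
  have "card {a,b,c,d} \<le> Suc (card {b,c,d})" by (rule card_ins_le) simp
  moreover have "card {b,c,d} \<le> Suc (card {c,d})" by (rule card_ins_le) simp
  moreover have "card {c,d} \<le> Suc (card {d})" by (rule card_ins_le) simp
  ultimately show ?thesis by simp
qed

lemma nbr_card: "x \<in> GV n \<Longrightarrow> card {t\<in>T. GE n t x} \<le> 4"
proof -
  assume x: "x \<in> GV n"
  have "card {t\<in>T. GE n t x} \<le> card {((fst x+1) mod n, snd x), ((fst x+n-1) mod n, snd x),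
                     (fst x, (snd x+1) mod 4), (fst x, (snd x+3) mod 4)}"
    by (rule card_mono) (use nbr_sub[OF x] in auto)
  also have "\<dots> \<le> 4" by (rule card4)
  finally show ?thesis .
qed


lemma j4: "(j::nat) < 4 \<Longrightarrow> j = 0 \<or> j = 1 \<or> j = 2 \<or> j = 3" by arith

lemma mod_succ_inj: "(a::nat) < n \<Longrightarrow> b < n \<Longrightarrow> (a+1) mod n = (b+1) mod n \<Longrightarrow> a = b"
proof -
  assume h: "a < n" "b < n" "(a+1) mod n = (b+1) mod n"
  have m: "\<And>c. c < n \<Longrightarrow> (c+1) mod n = (if c+1 = n then 0 else c+1)" by auto
  show "a = b" using h m[OF h(1)] m[OF h(2)] by (auto split: if_splits)
qed

lemma key:
  assumes n3: "n \<ge> 3" and XV: "X \<subseteq> GV n" and ab: "(a,b) \<in> X"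
   and dom: "\<forall>t\<in>T. \<exists>x\<in>X. GE n t x"
   and uniq: "\<forall>t\<in>T. \<forall>x\<in>X. \<forall>y\<in>X. GE n t x \<longrightarrow> GE n t y \<longrightarrow> x = y"
   and clos: "\<forall>i j. (i,j) \<in> X \<longrightarrow> (i,(j+1) mod 4) \<in> T \<and> ((i+1) mod n, j) \<in> T \<and> ((i+1) mod n, (j+2) mod 4) \<in> T"
   and k: "n dvd 2*k" "(2*k) mod 4 = 2"
  shows False
proof -
  have no2: "(i,(j+2) mod 4) \<notin> X" if ij: "(i,j) \<in> X" for i j
  proof
    assume x2: "(i,(j+2) mod 4) \<in> X"
    have j: "j < 4" using ij XV by auto
    have t: "(i,(j+1) mod 4) \<in> T" using clos ij by blast
    have e1: "GE n (i,(j+1) mod 4) (i,j)" using j4[OF j] by (auto simp: GE_iff cycle_adj_def)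
    have e2: "GE n (i,(j+1) mod 4) (i,(j+2) mod 4)" using j4[OF j] by (auto simp: GE_iff cycle_adj_def)
    have "(i,j) = (i,(j+2) mod 4)" using uniq t ij x2 e1 e2 by blast
    then show False using j4[OF j] by auto
  qed
  have R: "((i+2) mod n, (j+2) mod 4) \<in> X" if ij: "(i,j) \<in> X" for i j
  proof -
    have i: "i < n" and j: "j < 4" using ij XV by auto
    have w: "((i+1) mod n, (j+2) mod 4) \<in> T" using clos ij by blast
    then obtain x where x: "x \<in> X" "GE n ((i+1) mod n, (j+2) mod 4) x" using dom by blast
    obtain i' j' where xe: "x = (i', j')" by (cases x)
    have i': "i' < n" and j': "j' < 4" using x XV xe by auto
    have "(i+1) mod n = i' \<and> cycle_adj 4 ((j+2) mod 4) j' \<or> (j+2) mod 4 = j' \<and> cycle_adj n ((i+1) mod n) i'"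
      using x(2) xe by (simp add: GE_iff)
    then show ?thesis
    proof
      assume A: "(i+1) mod n = i' \<and> cycle_adj 4 ((j+2) mod 4) j'"
      have jj: "j' = (j+1) mod 4 \<or> j' = (j+3) mod 4" using A j4[OF j] j4[OF j'] by (auto simp: cycle_adj_def)
      have t: "((i+1) mod n, j) \<in> T" using clos ij by blast
      have e1: "GE n ((i+1) mod n, j) (i,j)" using cyc_succ'[OF i] by (simp add: GE_iff)
      have e2: "GE n ((i+1) mod n, j) (i',j')" using A jj j4[OF j] by (auto simp: GE_iff cycle_adj_def)
      have "(i,j) = (i',j')" using uniq t ij x(1) xe e1 e2 by blast
      then show ?thesis using jj j4[OF j] by auto
    next
      assume B: "(j+2) mod 4 = j' \<and> cycle_adj n ((i+1) mod n) i'"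
      then have "i' = ((i+1) mod n + 1) mod n \<or> (i'+1) mod n = (i+1) mod n"
        by (auto simp: cycle_adj_def)
      then show ?thesis
      proof
        assume "i' = ((i+1) mod n + 1) mod n"
        then have "i' = (i+2) mod n" by (simp add: mod_Suc_eq)
        then show ?thesis using x(1) xe B by simp
      next
        assume "(i'+1) mod n = (i+1) mod n"
        then have "i' = i" using mod_succ_inj i i' by blast
        then have "(i,(j+2) mod 4) \<in> X" using x(1) xe B by simp
        then show ?thesis using no2 ij by blast
      qed
    qed
  qed
  have it: "((a+2*m) mod n, (b+2*m) mod 4) \<in> X" for m
  proof (induction m)
    case 0
    have "a < n" "b < 4" using ab XV by auto
    then show ?case using ab by simp
  next
    case (Suc m)
    from R[OF Suc] have "(((a+2*m) mod n + 2) mod n, ((b+2*m) mod 4 + 2) mod 4) \<in> X" .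
    moreover have "((a+2*m) mod n + 2) mod n = (a + 2 * Suc m) mod n"
      using mod_add_left_eq[of "a+2*m" n 2] by simp
    moreover have "((b+2*m) mod 4 + 2) mod 4 = (b + 2 * Suc m) mod 4"
      using mod_add_left_eq[of "b+2*m" 4 2] by simp
    ultimately show ?case by simp
  qed
  have "a < n" "b < 4" using ab XV by auto
  have "(a+2*k) mod n = a" using k(1) \<open>a < n\<close> by (simp add: mod_add_right_eq[symmetric])
  moreover have "(b+2*k) mod 4 = (b+2) mod 4" using k(2) by (metis mod_add_right_eq)
  ultimately have "(a, (b+2) mod 4) \<in> X" using it[of k] by simp
  then show False using no2 ab by blast
qed


definition par :: "nat \<times> nat \<Rightarrow> nat" where "par p = (fst p + snd p) mod 2"

lemma par_modr: "even (m::nat) \<Longrightarrow> (i + x mod m) mod 2 = (i + x) mod 2"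
  by (metis mod_add_right_eq mod_mod_cancel)
lemma par_modl: "even (m::nat) \<Longrightarrow> (x mod m + j) mod 2 = (x + j) mod 2"
  by (metis mod_add_left_eq mod_mod_cancel)

lemma pa1: "(c::nat) < 2 \<Longrightarrow> (i+j) mod 2 \<noteq> c \<Longrightarrow> j mod 2 = (i+c+1) mod 2" by presburger
lemma pa2: "j mod 2 = ((i::nat)+c+1) mod 2 \<Longrightarrow> (c::nat) < 2 \<Longrightarrow> (i+j) mod 2 \<noteq> c" by presburger
lemma pa3: "((i::nat)+j+1) mod 2 \<noteq> (i+j) mod 2" by presburger
lemma pa4: "((i::nat)+1+(j+2)) mod 2 = (i+j+1) mod 2" by presburger
lemma pa5: "(i+j) mod 2 = (c::nat) \<Longrightarrow> (i+j+1) mod 2 \<noteq> c" by presburger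
lemma pa6: "odd (n::nat) \<Longrightarrow> (2*n) mod 4 = 2" by presburger
lemma pa7: "even (n::nat) \<Longrightarrow> (a::nat) + b \<le> n + 1 \<Longrightarrow> 2*a \<le> n \<or> 2*b \<le> n" by presburger

lemma bip: assumes "even n" "GE n p q" shows "par p \<noteq> par q"
proof -
  obtain i j where p: "p = (i,j)" by (cases p)
  obtain i' j' where q: "q = (i',j')" by (cases q)
  have "(i = i' \<and> cycle_adj 4 j j') \<or> (j = j' \<and> cycle_adj n i i')" using assms(2) by (simp add: p q GE_iff)
  then show ?thesis
  proof
    assume "i = i' \<and> cycle_adj 4 j j'"
    then have "i = i'" "j' = (j+1) mod 4 \<or> j = (j'+1) mod 4" by (auto simp: cycle_adj_def)
    from this(2) show ?thesis
    proof
      assume "j' = (j+1) mod 4"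
      then have "par q = (i+j+1) mod 2" using \<open>i = i'\<close> par_modr[of 4 i "j+1"] by (simp add: par_def q)
      then show ?thesis using pa3[of i j] by (simp add: par_def p)
    next
      assume "j = (j'+1) mod 4"
      then have "par p = (i+j'+1) mod 2" using \<open>i = i'\<close> par_modr[of 4 i "j'+1"] by (simp add: par_def p)
      then show ?thesis using pa3[of i j'] \<open>i = i'\<close> by (simp add: par_def q)
    qed
  next
    assume "j = j' \<and> cycle_adj n i i'"
    then have "j = j'" "i' = (i+1) mod n \<or> i = (i'+1) mod n" by (auto simp: cycle_adj_def)
    from this(2) show ?thesis
    proof
      assume "i' = (i+1) mod n"
      then have "par q = (i+j+1) mod 2" using \<open>j = j'\<close> par_modl[OF assms(1), of "i+1" j] by (simp add: par_def q)
      then show ?thesis using pa3[of i j] by (simp add: par_def p)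
    next
      assume "i = (i'+1) mod n"
      then have "par p = (i'+j+1) mod 2" using \<open>j = j'\<close> par_modl[OF assms(1), of "i'+1" j] by (simp add: par_def p)
      then show ?thesis using pa3[of i' j] \<open>j = j'\<close> by (simp add: par_def q add.commute add.left_commute)
    qed
  qed
qed

lemma card_T:
  assumes "even n" "c < 2"
  shows "card {p\<in>GV n. par p \<noteq> c} = 2 * n"
proof -
  let ?f = "\<lambda>(i,k). (i, 2*k + (i+c+1) mod 2)"
  have "{p\<in>GV n. par p \<noteq> c} = ?f ` ({0..<n} \<times> {0..<2})"
  proof (rule set_eqI, rule iffI)
    fix p assume "p \<in> {p\<in>GV n. par p \<noteq> c}"
    then obtain i j where p: "p = (i,j)" "i < n" "j < 4" "(i+j) mod 2 \<noteq> c" by (cases p) (auto simp: par_def)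
    have "j = 2 * (j div 2) + j mod 2" by simp
    then have "j = 2 * (j div 2) + (i+c+1) mod 2" using pa1[OF assms(2) p(4)] by simp
    moreover have "j div 2 < 2" using p(3) by simp
    ultimately show "p \<in> ?f ` ({0..<n} \<times> {0..<2})" using p by (intro image_eqI[of _ _ "(i, j div 2)"]) auto
  next
    fix p assume "p \<in> ?f ` ({0..<n} \<times> {0..<2})"
    then obtain i k where "p = (i, 2*k + (i+c+1) mod 2)" "i < n" "k < 2" by auto
    moreover have "(2*k + (i+c+1) mod 2) mod 2 = (i+c+1) mod 2" by simp
    moreover have "2*k + (i+c+1) mod 2 < 4" using \<open>k < 2\<close> by simp
    ultimately show "p \<in> {p\<in>GV n. par p \<noteq> c}" using pa2[OF _ assms(2)] by (auto simp: par_def)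
  qed
  moreover have "inj_on ?f ({0..<n} \<times> {0..<2})"
    by (rule inj_onI) auto
  ultimately show ?thesis by (simp add: card_image)
qed

lemma lower:
  assumes n3: "n \<ge> 3" and td: "total_dominating (GV n) (GE n) D"
  shows "(if n mod 4 = 0 then n else if n mod 4 = 2 then n+2 else n+1) \<le> card D"
proof -
  have DV: "D \<subseteq> GV n" and dom: "\<forall>v\<in>GV n. \<exists>u\<in>D. GE n v u" using td by (auto simp: total_dominating_def)
  have fD: "finite D" using finite_subset[OF DV finite_GV] .
  have nb: "\<forall>x\<in>D. card {t\<in>T. GE n t x} \<le> 4" for T
    using DV nbr_card[of _ n T] by (auto simp del: mem_GV)
  have base: "n \<le> card D" using count_lower[OF finite_GV fD dom nb] card_GV by simp
  show ?thesis
  proof (cases "odd n")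
    case True
    have "n + 1 \<le> card D"
    proof (rule ccontr)
      assume "\<not> n + 1 \<le> card D"
      then have le: "4 * card D \<le> card (GV n)" using card_GV by simp
      have uq: "\<forall>t\<in>GV n. \<forall>x\<in>D. \<forall>y\<in>D. GE n t x \<longrightarrow> GE n t y \<longrightarrow> x = y"
        using count_unique[OF finite_GV fD dom nb le] by blast
      have "(0,0) \<in> GV n" using n3 by simp
      then obtain a b where ab: "(a,b) \<in> D" using dom by fast
      have cl: "\<forall>i j. (i,j) \<in> D \<longrightarrow> (i,(j+1) mod 4) \<in> GV n \<and> ((i+1) mod n, j) \<in> GV n \<and> ((i+1) mod n, (j+2) mod 4) \<in> GV n"
        using n3 DV by auto
      have k2: "(2*n) mod 4 = 2" using True pa6 by simp
      show False by (rule key[OF n3 DV ab dom uq cl _ k2]) simp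
    qed
    moreover have "n mod 4 \<noteq> 0" "n mod 4 \<noteq> 2" using True by presburger+
    ultimately show ?thesis by simp
  next
    case False
    then have ev: "even n" by simp
    show ?thesis
    proof (cases "n mod 4 = 2")
      case False
      then have "n mod 4 = 0" using ev by presburger
      then show ?thesis using base by simp
    next
      case m2: True
      have "n + 2 \<le> card D"
      proof (rule ccontr)
        assume "\<not> n + 2 \<le> card D"
        then have cD: "card D \<le> n + 1" by simp
        define X where "X c = {p\<in>D. par p = c}" for c
        define T where "T c = {p\<in>GV n. par p \<noteq> c}" for c
        have "D = X 0 \<union> X 1" by (auto simp: X_def par_def)
        moreover have "X 0 \<inter> X 1 = {}" by (auto simp: X_def)
        ultimately have "card D = card (X 0) + card (X 1)"
          using fD by (metis card_Un_disjoint finite_Un)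
        then have "2 * card (X 0) \<le> n \<or> 2 * card (X 1) \<le> n" using cD ev pa7 by simp
        then obtain c where c: "c < 2" "2 * card (X c) \<le> n" by (metis zero_less_numeral one_less_numeral_iff semiring_norm(76))
        have fX: "finite (X c)" using fD by (auto simp: X_def)
        have fT: "finite (T c)" by (rule finite_subset[of _ "GV n"]) (auto simp: T_def simp del: mem_GV)
        have XV: "X c \<subseteq> GV n" using DV by (auto simp: X_def)
        have cT: "card (T c) = 2 * n" unfolding T_def by (rule card_T[OF ev c(1)])
        have domX: "\<forall>t\<in>T c. \<exists>x\<in>X c. GE n t x"
        proof
          fix t assume t: "t \<in> T c"
          then have "t \<in> GV n" by (simp add: T_def)
          then obtain u where u: "u \<in> D" "GE n t u" using dom by blast
          have "par t \<noteq> par u" by (rule bip[OF ev u(2)])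
          moreover have "par t \<noteq> c" "par t < 2" "par u < 2" using t by (auto simp: T_def par_def)
          ultimately have "par u = c" using c(1) by linarith
          then have "u \<in> X c" using u by (simp add: X_def)
          then show "\<exists>x\<in>X c. GE n t x" using u(2) by blast
        qed
        have nbX: "\<forall>x\<in>X c. card {t\<in>T c. GE n t x} \<le> 4" using XV nbr_card by blast
        have le: "4 * card (X c) \<le> card (T c)" using cT c(2) by simp
        have uq: "\<forall>t\<in>T c. \<forall>x\<in>X c. \<forall>y\<in>X c. GE n t x \<longrightarrow> GE n t y \<longrightarrow> x = y"
          using count_unique[OF fT fX domX nbX le] by blast
        have "(0, 1 - c) \<in> T c" using c(1) n3 by (auto simp: T_def par_def) arith
        then obtain a b where ab: "(a,b) \<in> X c" using domX by fast
        have cl: "\<forall>i j. (i,j) \<in> X c \<longrightarrow> (i,(j+1) mod 4) \<in> T c \<and> ((i+1) mod n, j) \<in> T c \<and> ((i+1) mod n, (j+2) mod 4) \<in> T c"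
        proof (intro allI impI)
          fix i j assume "(i,j) \<in> X c"
          then have h: "i < n" "j < 4" "(i+j) mod 2 = c" using XV by (auto simp: X_def par_def)
          have "(i + (j+1) mod 4) mod 2 = (i+j+1) mod 2" using par_modr[of 4 i "j+1"] by simp
          moreover have "((i+1) mod n + j) mod 2 = (i+j+1) mod 2" using par_modl[OF ev, of "i+1" j] by simp
          moreover have "((i+1) mod n + (j+2) mod 4) mod 2 = (i+j+1) mod 2"
            using par_modl[OF ev, of "i+1" "(j+2) mod 4"] par_modr[of 4 "i+1" "j+2"] pa4[of i j] by simp
          moreover have "(i+j+1) mod 2 \<noteq> c" using pa5[OF h(3)] .
          ultimately show "(i,(j+1) mod 4) \<in> T c \<and> ((i+1) mod n, j) \<in> T c \<and> ((i+1) mod n, (j+2) mod 4) \<in> T c"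
            using h n3 by (auto simp: T_def par_def)
        qed
        have k1: "n dvd 2 * (n div 2)" using ev by simp
        have k2: "(2 * (n div 2)) mod 4 = 2" using ev m2 by simp
        show False by (rule key[OF n3 XV ab domX uq cl k1 k2])
      qed
      then show ?thesis using m2 by simp
    qed
  qed
qed


definition DD :: "nat \<Rightarrow> (nat \<times> nat) set" where
  "DD n = {(i,j). i < n \<and> j < 4 \<and> ((i mod 4 = 0 \<and> j < 2) \<or> (i mod 4 = 2 \<and> 2 \<le> j) \<or> (n mod 4 = 2 \<and> i = n - 1 \<and> j < 2))}"

definition MM :: "nat \<Rightarrow> (nat \<times> nat) set set" where
  "MM n = {{(i,2*k),(i,2*k+1)} | i k. (i,2*k) \<in> DD n}"

lemma DD_block: "(i,j) \<in> DD n \<longleftrightarrow> i < n \<and> j < 4 \<and> (i, 2*(j div 2)) \<in> DD n"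
  by (auto simp: DD_def)

lemma mm1: "(i::nat) mod 4 = 1 \<Longrightarrow> 1 \<le> i \<Longrightarrow> (i-1) mod 4 = 0" by presburger
lemma mm2: "(i::nat) + 1 = n \<Longrightarrow> i mod 4 = 1 \<Longrightarrow> n mod 4 = 2" by presburger
lemma mm3: "(i::nat) mod 4 = 1 \<Longrightarrow> (i+1) mod 4 = 2" by presburger
lemma mm4: "(i::nat) mod 4 = 3 \<Longrightarrow> (i-1) mod 4 = 2"
proof -
  assume a: "i mod 4 = 3"
  have "i = 4*(i div 4) + 3" using a div_mult_mod_eq[of i 4] by simp
  then have "i - 1 = 4*(i div 4) + 2" by simp
  moreover have "(4*(i div 4) + 2) mod 4 = 2" by presburger
  ultimately show ?thesis by simp
qed
lemma mm5: "(i::nat) mod 4 = 3 \<Longrightarrow> (i+1) mod 4 = 0" by presburger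

lemma dom_up:
  assumes n3: "n \<ge> 3" and v: "(i,j) \<in> GV n"
  shows "\<exists>u\<in>DD n. GE n (i,j) u"
proof -
  have i: "i < n" and j: "j < 4" using v by auto
  have col01: "\<exists>u\<in>DD n. GE n (i,j) u" if "(i,0) \<in> DD n" "(i,1) \<in> DD n"
  proof -
    have "j = 0 \<or> j = 1 \<or> j = 2 \<or> j = 3" using j by arith
    then show ?thesis
    proof (elim disjE)
      assume "j = 0" then show ?thesis using that by (intro bexI[of _ "(i,1)"]) (auto simp: GE_iff cycle_adj_def)
    next
      assume "j = 1" then show ?thesis using that by (intro bexI[of _ "(i,0)"]) (auto simp: GE_iff cycle_adj_def)
    next
      assume "j = 2" then show ?thesis using that by (intro bexI[of _ "(i,1)"]) (auto simp: GE_iff cycle_adj_def)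
    next
      assume "j = 3" then show ?thesis using that by (intro bexI[of _ "(i,0)"]) (auto simp: GE_iff cycle_adj_def)
    qed
  qed
  have col23: "\<exists>u\<in>DD n. GE n (i,j) u" if "(i,2) \<in> DD n" "(i,3) \<in> DD n"
  proof -
    have "j = 0 \<or> j = 1 \<or> j = 2 \<or> j = 3" using j by arith
    then show ?thesis
    proof (elim disjE)
      assume "j = 0" then show ?thesis using that by (intro bexI[of _ "(i,3)"]) (auto simp: GE_iff cycle_adj_def)
    next
      assume "j = 1" then show ?thesis using that by (intro bexI[of _ "(i,2)"]) (auto simp: GE_iff cycle_adj_def)
    next
      assume "j = 2" then show ?thesis using that by (intro bexI[of _ "(i,3)"]) (auto simp: GE_iff cycle_adj_def)
    next
      assume "j = 3" then show ?thesis using that by (intro bexI[of _ "(i,2)"]) (auto simp: GE_iff cycle_adj_def)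
    qed
  qed
  have m4: "i mod 4 = 0 \<or> i mod 4 = 1 \<or> i mod 4 = 2 \<or> i mod 4 = 3" by arith
  show ?thesis
  proof (cases "i mod 4 = 0 \<or> (n mod 4 = 2 \<and> i = n - 1)")
    case True
    then show ?thesis using col01 i by (auto simp: DD_def)
  next
    case F1: False
    show ?thesis
    proof (cases "i mod 4 = 2")
      case True
      then show ?thesis using col23 i by (auto simp: DD_def)
    next
      case False
      then have m13: "i mod 4 = 1 \<or> i mod 4 = 3" using m4 F1 by auto
      then have i1: "i \<ge> 1" by (cases i) auto
      have prev: "GE n (i,j) (i-1,j)" using i i1 by (simp add: GE_iff cycle_adj_def) arith
      have nxt: "GE n (i,j) ((i+1) mod n,j)" using cyc_succ[OF i] by (simp add: GE_iff)
      from m13 show ?thesis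
      proof
        assume a: "i mod 4 = 1"
        have p0: "(i-1) mod 4 = 0" using mm1[OF a i1] .
        have "i + 1 \<noteq> n"
        proof
          assume "i + 1 = n"
          then have "n mod 4 = 2" using mm2 a by blast
          then show False using F1 \<open>i + 1 = n\<close> by auto
        qed
        then have "i + 1 < n" using i by simp
        then have nx: "(i+1) mod n = i + 1" by simp
        have p2: "(i+1) mod 4 = 2" using mm3[OF a] .
        show ?thesis
        proof (cases "j < 2")
          case True
          then have "(i-1,j) \<in> DD n" using p0 i j by (auto simp: DD_def)
          then show ?thesis using prev by blast
        next
          case False
          then have "(i+1,j) \<in> DD n" using p2 \<open>i+1<n\<close> j by (auto simp: DD_def)
          then show ?thesis using nxt nx by auto
        qed
      next
        assume a: "i mod 4 = 3"
        have p2: "(i-1) mod 4 = 2" using mm4[OF a] .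
        have p0: "((i+1) mod n) mod 4 = 0"
        proof (cases "i + 1 = n")
          case True
          then show ?thesis by simp
        next
          case False
          then have "(i+1) mod n = i + 1" using i by simp
          then show ?thesis using mm5[OF a] by simp
        qed
        have "(i+1) mod n < n" using i by simp
        show ?thesis
        proof (cases "j < 2")
          case True
          then have "((i+1) mod n,j) \<in> DD n" using p0 \<open>(i+1) mod n < n\<close> j by (auto simp: DD_def)
          then show ?thesis using nxt by blast
        next
          case False
          then have "(i-1,j) \<in> DD n" using p2 i j by (auto simp: DD_def)
          then show ?thesis using prev by blast
        qed
      qed
    qed
  qed
qed


lemma ev4: "even (i::nat) \<longleftrightarrow> i mod 4 = 0 \<or> i mod 4 = 2" by presburger
lemma odd_last: "(n::nat) mod 4 = 2 \<Longrightarrow> odd (n - 1)" by presburger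
lemma evd1: "even (i::nat) \<Longrightarrow> i < n \<Longrightarrow> i div 2 < (n+1) div 2" by presburger
lemma evd2: "(k::nat) < (n+1) div 2 \<Longrightarrow> 2*k < n" by presburger
lemma fin_num: "2*(((n::nat)+1) div 2) + (if n mod 4 = 2 then 2 else 0) = (if n mod 4 = 0 then n else if n mod 4 = 2 then n+2 else n+1)" by presburger

lemma jd: "(j::nat) = 2*(j div 2) \<or> j = 2*(j div 2)+1" by presburger

lemma jk: "(j::nat) = 2*k \<or> j = 2*k+1 \<Longrightarrow> k = j div 2" by presburger

lemma pm: "perfect_matching_on (GE n) (DD n) (MM n)"
  unfolding perfect_matching_on_def
proof (intro conjI ballI)
  fix e assume "e \<in> MM n"
  then obtain i k where e: "e = {(i,2*k),(i,2*k+1)}" "(i,2*k) \<in> DD n" by (auto simp: MM_def)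
  have k: "2*k < 4" "i < n" using e(2) by (auto simp: DD_def)
  have "k = 0 \<or> k = 1" using k by arith
  then have d2: "(i,2*k+1) \<in> DD n" using e(2) unfolding DD_def by auto
  have "cycle_adj 4 (2*k) (2*k+1)" using k by (auto simp: cycle_adj_def)
  then have "GE n (i,2*k) (i,2*k+1)" by (simp add: GE_iff)
  then show "\<exists>u v. e = {u, v} \<and> u \<in> DD n \<and> v \<in> DD n \<and> u \<noteq> v \<and> GE n u v"
    using e d2 \<open>GE n (i,2*k) (i,2*k+1)\<close> by (intro exI[of _ "(i,2*k)"] exI[of _ "(i,2*k+1)"]) simp
next
  fix v assume v: "v \<in> DD n"
  obtain i j where ve: "v = (i,j)" by (cases v)
  let ?e = "{(i,2*(j div 2)),(i,2*(j div 2)+1)}"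
  have b: "(i, 2*(j div 2)) \<in> DD n" using v ve DD_block by blast
  have inM: "?e \<in> MM n" using b unfolding MM_def by blast
  have vin: "v \<in> ?e" using ve jd[of j] by auto
  show "\<exists>!e. e \<in> MM n \<and> v \<in> e"
  proof (rule ex1I[of _ ?e])
    show "?e \<in> MM n \<and> v \<in> ?e" using inM vin by blast
  next
    fix e assume "e \<in> MM n \<and> v \<in> e"
    then obtain i' k where e: "e = {(i',2*k),(i',2*k+1)}" "v \<in> e" by (auto simp: MM_def)
    then have "i' = i" "j = 2*k \<or> j = 2*k+1" using ve by auto
    then have "k = j div 2" using jk by blast
    then show "e = ?e" using e \<open>i' = i\<close> by simp
  qed
qed

lemma card_E: "card {i. i < n \<and> even (i::nat)} = (n+1) div 2"
proof -
  have "{i. i < n \<and> even (i::nat)} = (\<lambda>k. 2*k) ` {..<(n+1) div 2}"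
  proof (rule set_eqI, rule iffI)
    fix i assume "i \<in> {i. i < n \<and> even (i::nat)}"
    then have "i = 2 * (i div 2)" "i div 2 < (n+1) div 2" using evd1 by auto
    then show "i \<in> (\<lambda>k. 2*k) ` {..<(n+1) div 2}" by blast
  next
    fix i assume "i \<in> (\<lambda>k. 2*k) ` {..<(n+1) div 2}"
    then show "i \<in> {i. i < n \<and> even (i::nat)}" using evd2 by auto
  qed
  moreover have "inj_on (\<lambda>k::nat. 2*k) {..<(n+1) div 2}" by (rule inj_onI) simp
  ultimately show ?thesis by (simp add: card_image)
qed

lemma card_DD: "card (DD n) = (if n mod 4 = 0 then n else if n mod 4 = 2 then n+2 else n+1)"
proof -
  define E where "E = {i. i < n \<and> even (i::nat)}"
  define A where "A = Sigma E (\<lambda>i. if i mod 4 = 0 then {0,1::nat} else {2,3})"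
  define B where "B = (if n mod 4 = 2 then {n-1} \<times> {0,1::nat} else {})"
  have fE: "finite E" by (simp add: E_def)
  have cA: "card A = 2 * card E" unfolding A_def using fE by (simp add: card_SigmaI if_distrib cong: if_cong)
  have cB: "card B = (if n mod 4 = 2 then 2 else 0)" by (simp add: B_def)
  have fA: "finite A" using fE by (simp add: A_def)
  have fB: "finite B" by (simp add: B_def)
  have dis: "A \<inter> B = {}" using odd_last by (auto simp: A_def B_def E_def)
  have eq: "DD n = A \<union> B"
  proof (rule set_eqI)
    fix p :: "nat \<times> nat"
    obtain i j where p: "p = (i,j)" by (cases p)
    show "p \<in> DD n \<longleftrightarrow> p \<in> A \<union> B"
      unfolding p DD_def A_def B_def E_def using ev4[of i] odd_last[of n] by auto
  qed
  have "card (DD n) = card A + card B" using eq dis fA fB by (simp add: card_Un_disjoint)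
  also have "\<dots> = 2*((n+1) div 2) + (if n mod 4 = 2 then 2 else 0)" using cA cB card_E by (simp add: E_def)
  finally show ?thesis using fin_num by simp
qed


lemma pd_td:
  assumes pd: "paired_dominating V E D" and sym: "\<And>p q. E p q = E q p"
  shows "total_dominating V E D"
  unfolding total_dominating_def
proof (intro conjI ballI)
  show "D \<subseteq> V" using pd by (simp add: paired_dominating_def)
next
  fix v assume v: "v \<in> V"
  obtain M where M: "perfect_matching_on E D M" using pd by (auto simp: paired_dominating_def)
  show "\<exists>u\<in>D. E v u"
  proof (cases "v \<in> D")
    case False
    then show ?thesis using pd v by (auto simp: paired_dominating_def)
  next
    case True
    then obtain e where e: "e \<in> M" "v \<in> e" using M unfolding perfect_matching_on_def by blast
    have "\<forall>e\<in>M. \<exists>u w. e = {u, w} \<and> u \<in> D \<and> w \<in> D \<and> u \<noteq> w \<and> E u w"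
      using M unfolding perfect_matching_on_def by (rule conjunct1)
    then obtain u w where uw: "e = {u,w}" "u \<in> D" "w \<in> D" "E u w" using e(1) by meson
    then have "v = u \<or> v = w" using e(2) by simp
    then show ?thesis
    proof
      assume "v = u" then show ?thesis using uw by blast
    next
      assume "v = w" then have "E v u" using uw sym by simp
      then show ?thesis using uw by blast
    qed
  qed
qed

lemma main:
  assumes n3: "n \<ge> 3"
  shows "gamma_t (GV n) (GE n) = (if n mod 4 = 0 then n else if n mod 4 = 2 then n+2 else n+1)
       \<and> gamma_p (GV n) (GE n) = (if n mod 4 = 0 then n else if n mod 4 = 2 then n+2 else n+1)"
proof -
  let ?f = "(if n mod 4 = 0 then n else if n mod 4 = 2 then n+2 else n+1)"
  have sym: "\<And>p q. GE n p q = GE n q p" by (rule GE_sym)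
  have pdD: "paired_dominating (GV n) (GE n) (DD n)"
    unfolding paired_dominating_def
  proof (intro conjI ballI)
    show "DD n \<subseteq> GV n" by (auto simp: DD_def)
  next
    fix v assume "v \<in> GV n - DD n"
    then obtain i j where "v = (i,j)" "(i,j) \<in> GV n" by (cases v) auto
    then show "\<exists>u\<in>DD n. GE n v u" using dom_up[OF n3] by blast
  next
    show "\<exists>M. perfect_matching_on (GE n) (DD n) M" using pm by blast
  qed
  have tdD: "total_dominating (GV n) (GE n) (DD n)" by (rule pd_td[OF pdD sym])
  have fin1: "finite {card D | D. total_dominating (GV n) (GE n) D}"
  proof (rule finite_subset[of _ "card ` Pow (GV n)"])
    show "{card D | D. total_dominating (GV n) (GE n) D} \<subseteq> card ` Pow (GV n)"
      by (auto simp: total_dominating_def simp del: mem_GV)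
  qed simp
  have fin2: "finite {card D | D. paired_dominating (GV n) (GE n) D}"
  proof (rule finite_subset[of _ "card ` Pow (GV n)"])
    show "{card D | D. paired_dominating (GV n) (GE n) D} \<subseteq> card ` Pow (GV n)"
      by (auto simp: paired_dominating_def simp del: mem_GV)
  qed simp
  have "gamma_t (GV n) (GE n) = ?f"
    unfolding gamma_t_def
  proof (rule Min_eqI[OF fin1])
    fix y assume "y \<in> {card D | D. total_dominating (GV n) (GE n) D}"
    then obtain D where "y = card D" "total_dominating (GV n) (GE n) D" by blast
    then show "?f \<le> y" using lower[OF n3] by simp
  next
    show "?f \<in> {card D | D. total_dominating (GV n) (GE n) D}" using tdD card_DD[of n] by (intro CollectI exI[of _ "DD n"]) simp
  qed
  moreover have "gamma_p (GV n) (GE n) = ?f"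
    unfolding gamma_p_def
  proof (rule Min_eqI[OF fin2])
    fix y assume "y \<in> {card D | D. paired_dominating (GV n) (GE n) D}"
    then obtain D where "y = card D" "paired_dominating (GV n) (GE n) D" by blast
    then have "total_dominating (GV n) (GE n) D" using pd_td sym by blast
    then show "?f \<le> y" using lower[OF n3] \<open>y = card D\<close> by simp
  next
    show "?f \<in> {card D | D. paired_dominating (GV n) (GE n) D}" using pdD card_DD[of n] by (intro CollectI exI[of _ "DD n"]) simp
  qed
  ultimately show ?thesis by simp
qed

theorem theorem4p1:
  fixes n :: nat
  assumes "n \<ge> 3"
  shows "gamma_t (cart_V (cycle_V n) (cycle_V 4)) (cart_adj (cycle_adj n) (cycle_adj 4))
           = gamma_p (cart_V (cycle_V n) (cycle_V 4)) (cart_adj (cycle_adj n) (cycle_adj 4))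
       \<and> gamma_t (cart_V (cycle_V n) (cycle_V 4)) (cart_adj (cycle_adj n) (cycle_adj 4))
           = (if n mod 4 = 0 then n else if n mod 4 = 2 then n + 2 else n + 1)"
  using main[OF assms] unfolding GV_def GE_def by (elim conjE) (simp only:)

end
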